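(* Let $\{\mathbb{P}_{s,t}:0\le s\le t\}$ and $\{\mathbb{P}'_{s,t}:0\le s\le t\}$ be polynomial processes, each having the harness property (i.e. there exist $\mathbb{X},\mathbb{X}'\in\mathcal{Q}$ with $\mathbb{P}_{0,t}\mathbb{F}=(\mathbb{F}+t\mathbb{X})\mathbb{P}_{0,t}$ and $\mathbb{P}'_{0,t}\mathbb{F}=(\mathbb{F}+t\mathbb{X}')\mathbb{P}'_{0,t}$ for all $t\ge0$). If their infinitesimal generators coincide, $\mathbb{A}_t=\mathbb{A}'_t$ for all $t>0$, then $\mathbb{P}_{s,t}=\mathbb{P}'_{s,t}$ for all $0\le s\le t$. That is, a polynomial process with the harness property is uniquely determined by its generator.
   Context: $\mathcal{Q}$ denotes the real linear space of all infinite sequences $\mathbb{P}=(p_0,p_1,\dots)$ of real polynomials in $x$, with product $\mathbb{P}\mathbb{Q}=\mathbb{R}=(r_0,r_1,\dots)$, $r_k(x)=\sum_{j=0}^{\deg q_k}[q_k]_j\,p_j(x)$ for $\mathbb{Q}=(q_0,q_1,\dots)$, where $[q]_j$ is the coefficient of $x^j$ in $q$ (this corresponds to composition of linear maps of the polynomial space, a map $\mathsf{P}$ being identified with $(\mathsf{P}(1),\mathsf{P}(x),\mathsf{P}(x^2),\dots)$). Special elements: $\mathbb{E}=(1,x,x^2,\dots)$ (identity), $\mathbb{F}=(x,x^2,\dots)$, $\mathbb{D}=(0,1,x,x^2,\dots)$. A polynomial process is a family $\{\mathbb{P}_{s,t}\in\mathcal{Q}:0\le s\le t\}$ with: (i)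 the $n$-th component of $\mathbb{P}_{s,t}$ is a polynomial of degree exactly $n$ for every $n\ge0$; (ii) $\mathbb{P}_{s,t}(\mathbb{E}-\mathbb{F}\mathbb{D})=\mathbb{E}-\mathbb{F}\mathbb{D}$; (iii) $\mathbb{P}_{s,t}\mathbb{P}_{t,u}=\mathbb{P}_{s,u}$ for $0\le s\le t\le u$. Its infinitesimal generator is $\mathbb{A}_t=\lim_{h\to0^+}\frac1h(\mathbb{P}_{t-h,t}-\mathbb{E})$, $t>0$, limit taken coefficientwise (it exists under the harness property). *)

theory Defs
  imports "HOL-Analysis.Analysis" "HOL-Computational_Algebra.Polynomial"
begin

type_synonym qseq = "nat \<Rightarrow> real poly"

definition qmult :: "qseq \<Rightarrow> qseq \<Rightarrow> qseq" (infixl "\<star>" 70) where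
  "qmult P Q = (\<lambda>k. \<Sum>j\<le>degree (Q k). smult (coeff (Q k) j) (P j))"

definition qadd :: "qseq \<Rightarrow> qseq \<Rightarrow> qseq" where
  "qadd P Q = (\<lambda>n. P n + Q n)"
definition qsub :: "qseq \<Rightarrow> qseq \<Rightarrow> qseq" where
  "qsub P Q = (\<lambda>n. P n - Q n)"
definition qscale :: "real \<Rightarrow> qseq \<Rightarrow> qseq" where
  "qscale c P = (\<lambda>n. smult c (P n))"

definition qE :: qseq where "qE = (\<lambda>n. monom 1 n)"
definition qF :: qseq where "qF = (\<lambda>n. monom 1 (Suc n))"
definition qD :: qseq where "qD = (\<lambda>n. if n = 0 then 0 else monom 1 (n - 1))"

text \<open>Polynomial process: P s t is only meaningful for 0 \<le> s \<le> t.\<close>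
definition polynomial_process :: "(real \<Rightarrow> real \<Rightarrow> qseq) \<Rightarrow> bool" where
  "polynomial_process P \<longleftrightarrow>
     (\<forall>s t. 0 \<le> s \<and> s \<le> t \<longrightarrow>
        (\<forall>n. P s t n \<noteq> 0 \<and> degree (P s t n) = n) \<and>
        P s t \<star> qsub qE (qF \<star> qD) = qsub qE (qF \<star> qD)) \<and>
     (\<forall>s t u. 0 \<le> s \<and> s \<le> t \<and> t \<le> u \<longrightarrow> P s t \<star> P t u = P s u)"

definition harness :: "(real \<Rightarrow> real \<Rightarrow> qseq) \<Rightarrow> bool" where
  "harness P \<longleftrightarrow> (\<exists>X. \<forall>t\<ge>0. P 0 t \<star> qF = qadd qF (qscale t X) \<star> P 0 t)"

text \<open>Infinitesimal generator, coefficientwise: generator P t n j is the coefficient of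
  x^j in the n-th component of A_t = lim_{h\<rightarrow>0+} (P_{t-h,t} - E)/h.\<close>
definition generator :: "(real \<Rightarrow> real \<Rightarrow> qseq) \<Rightarrow> real \<Rightarrow> nat \<Rightarrow> nat \<Rightarrow> real" where
  "generator P t = (\<lambda>n j. Lim (at_right 0) (\<lambda>h. coeff (P (t - h) t n - qE n) j / h))"

end

theory Submission
  imports Defs
begin


lemma qmult_N:
  assumes "degree (B k) \<le> N"
  shows "(A \<star> B) k = (\<Sum>j\<le>N. smult (coeff (B k) j) (A j))"
  unfolding qmult_def
  by (rule sum.mono_neutral_left) (use assms in \<open>auto simp: coeff_eq_0\<close>)

lemma coeff_qmult_N:
  assumes "degree (B k) \<le> N"
  shows "coeff ((A \<star> B) k) i = (\<Sum>j\<le>N. coeff (B k) j * coeff (A j) i)"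
  by (simp add: qmult_N[of B k N, OF assms] coeff_sum)

definition LA :: "qseq \<Rightarrow> real poly \<Rightarrow> real poly" where
  "LA A p = (\<Sum>j\<le>degree p. smult (coeff p j) (A j))"

lemma LA_N: "degree p \<le> N \<Longrightarrow> LA A p = (\<Sum>j\<le>N. smult (coeff p j) (A j))"
  unfolding LA_def by (rule sum.mono_neutral_left) (auto simp: coeff_eq_0)

lemma LA_diff: "LA A (p - q) = LA A p - LA A q"
proof -
  let ?N = "max (degree p) (degree q)"
  have "degree (p - q) \<le> ?N" by (simp add: degree_diff_le)
  then show ?thesis
    by (simp add: LA_N[of _ ?N] sum_subtractf[symmetric] smult_diff_left)
qed

lemma LA_inj:
  assumes tri: "\<And>j. A j \<noteq> 0 \<and> degree (A j) = j" and z: "LA A p = 0"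
  shows "p = 0"
proof (rule ccontr)
  assume "p \<noteq> 0"
  define d where "d = degree p"
  have "coeff (LA A p) d = (\<Sum>j\<le>d. coeff p j * coeff (A j) d)"
    by (simp add: LA_def d_def coeff_sum)
  also have "\<dots> = (\<Sum>j\<in>{d}. coeff p j * coeff (A j) d)"
  proof (rule sum.mono_neutral_right)
    show "\<forall>i\<in>{..d} - {d}. coeff p i * coeff (A i) d = 0"
      using tri by (auto intro!: coeff_eq_0 simp: le_less)
  qed auto
  also have "\<dots> = coeff p d * coeff (A d) d" by simp
  also have "\<dots> \<noteq> 0" using \<open>p \<noteq> 0\<close> tri[of d] unfolding d_def
    by (metis leading_coeff_0_iff mult_eq_0_iff)
  finally show False using z by simp
qed

lemma qcancel:
  assumes tri: "\<And>j. A j \<noteq> 0 \<and> degree (A j) = j" and e: "A \<star> B = A \<star> C"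
  shows "B = C"
proof
  fix k
  have "(A \<star> B) k = LA A (B k)" "(A \<star> C) k = LA A (C k)"
    by (simp_all add: qmult_def LA_def)
  then have "LA A (B k - C k) = 0" using e by (simp add: LA_diff)
  then have "B k - C k = 0" by (rule LA_inj[OF tri])
  then show "B k = C k" by simp
qed

lemma qmult_E: "A \<star> qE = A"
proof
  fix k
  show "(A \<star> qE) k = A k"
    unfolding qmult_def qE_def by (simp add: coeff_monom degree_monom_eq if_distrib[of "\<lambda>c. smult c _"] cong: if_cong)
qed

lemma V_eq: "qsub qE (qF \<star> qD) 0 = 1"
  unfolding qsub_def qE_def qF_def qD_def qmult_def by (simp add: monom_0 one_pCons)

lemma pp_deg: "polynomial_process P \<Longrightarrow> 0 \<le> s \<Longrightarrow> s \<le> t \<Longrightarrow> P s t n \<noteq> 0 \<and> degree (P s t n) = n"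
  unfolding polynomial_process_def by blast

lemma pp_comp: "polynomial_process P \<Longrightarrow> 0 \<le> s \<Longrightarrow> s \<le> t \<Longrightarrow> t \<le> u \<Longrightarrow> P s t \<star> P t u = P s u"
  unfolding polynomial_process_def by blast

lemma pp_zero: assumes "polynomial_process P" "0 \<le> s" "s \<le> t" shows "P s t 0 = 1"
proof -
  have e: "P s t \<star> qsub qE (qF \<star> qD) = qsub qE (qF \<star> qD)"
    using assms unfolding polynomial_process_def by blast
  have "(P s t \<star> qsub qE (qF \<star> qD)) 0 = P s t 0"
    unfolding qmult_def[of "P s t"] by (simp only: V_eq) simp
  then show ?thesis using e V_eq by metis
qed

lemma pp_00: assumes "polynomial_process P" shows "P 0 0 = qE"
proof -
  have "P 0 0 \<star> P 0 0 = P 0 0 \<star> qE" using pp_comp[OF assms, of 0 0 0] by (simp add: qmult_E)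
  then show ?thesis by (rule qcancel[rotated]) (use pp_deg[OF assms, of 0 0] in auto)
qed



lemma harness_step:
  assumes pp: "polynomial_process P" and X: "\<forall>t\<ge>0. P 0 t \<star> qF = qadd qF (qscale t X) \<star> P 0 t"
    and t: "0 \<le> t"
  shows "coeff (P 0 t (Suc n)) k =
     (\<Sum>j\<le>n. coeff (P 0 t n) j * (coeff (monom 1 (Suc j)) k + t * coeff (X j) k))"
proof -
  have "(P 0 t \<star> qF) n = P 0 t (Suc n)"
    unfolding qmult_def[of "P 0 t"] qF_def
    by (simp add: coeff_monom degree_monom_eq if_distrib[of "\<lambda>c. smult c _"] cong: if_cong)
  moreover have "coeff ((qadd qF (qscale t X) \<star> P 0 t) n) k =
     (\<Sum>j\<le>n. coeff (P 0 t n) j * (coeff (monom 1 (Suc j)) k + t * coeff (X j) k))"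
    using pp_deg[OF pp, of 0 t n] t
    by (simp add: coeff_qmult_N[of _ n n] qadd_def qscale_def qF_def)
  ultimately show ?thesis using X t by metis
qed

lemma harness_poly:
  assumes pp: "polynomial_process P" and h: "harness P"
  shows "\<exists>p. \<forall>t\<ge>0. coeff (P 0 t n) k = poly p t"
proof -
  obtain X where X: "\<forall>t\<ge>0. P 0 t \<star> qF = qadd qF (qscale t X) \<star> P 0 t"
    using h unfolding harness_def by blast
  show ?thesis
  proof (induction n arbitrary: k)
    case 0
    show ?case
      by (rule exI[of _ "[:coeff 1 k:]"]) (use pp_zero[OF pp] in simp)
  next
    case (Suc n)
    then have "\<forall>j. \<exists>p. \<forall>t\<ge>0. coeff (P 0 t n) j = poly p t" by blast
    then obtain f where f: "\<And>j t. t \<ge> 0 \<Longrightarrow> coeff (P 0 t n) j = poly (f j) t" by metis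
    show ?case
    proof (rule exI[of _ "\<Sum>j\<le>n. f j * [:coeff (monom 1 (Suc j)) k, coeff (X j) k:]"], intro allI impI)
      fix t :: real assume t: "0 \<le> t"
      show "coeff (P 0 t (Suc n)) k = poly (\<Sum>j\<le>n. f j * [:coeff (monom 1 (Suc j)) k, coeff (X j) k:]) t"
        by (simp add: harness_step[OF pp X t] poly_sum f[OF t] algebra_simps)
    qed
  qed
qed

lemma tri_lim:
  fixes c :: "nat \<Rightarrow> 'a \<Rightarrow> real" and b :: "nat \<Rightarrow> nat \<Rightarrow> 'a \<Rightarrow> real"
  assumes wid: "\<And>i. i \<le> n \<Longrightarrow> eventually (\<lambda>h. w i h = (\<Sum>j\<le>n. c j h * b j i h)) F"
    and bz: "\<And>i j. j < i \<Longrightarrow> eventually (\<lambda>h. b j i h = 0) F"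
    and bl: "\<And>i j. (b j i \<longlongrightarrow> B j i) F" and bd: "\<And>j. j \<le> n \<Longrightarrow> B j j \<noteq> 0"
    and wl: "\<And>i. (w i \<longlongrightarrow> W i) F"
  shows "m \<le> n \<Longrightarrow> \<exists>L. (c m \<longlongrightarrow> L) F"
proof -
  have stp: "\<exists>L. (c m \<longlongrightarrow> L) F" if m: "m \<le> n" and IH: "\<forall>j. m < j \<and> j \<le> n \<longrightarrow> (\<exists>L. (c j \<longlongrightarrow> L) F)" for m
  proof -
    obtain Lf where Lf: "\<And>j. m < j \<and> j \<le> n \<Longrightarrow> (c j \<longlongrightarrow> Lf j) F" using IH by metis
    have ev1: "eventually (\<lambda>h. b m m h \<noteq> 0) F"
      using bl[of m m] bd[OF m] by (rule tendsto_imp_eventually_ne)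
    have ev2: "eventually (\<lambda>h. \<forall>j\<in>{..<m}. b j m h = 0) F"
      by (rule eventually_ball_finite) (auto intro: bz)
    have ev: "eventually (\<lambda>h. c m h = (w m h - (\<Sum>j\<in>{m<..n}. c j h * b j m h)) / b m m h) F"
      using ev1 ev2 wid[OF m]
    proof eventually_elim
      case (elim h)
      have split: "{..n} = {..<m} \<union> ({m} \<union> {m<..n})" using m by auto
      have "w m h = (\<Sum>j\<in>{..<m}. c j h * b j m h) + (c m h * b m m h + (\<Sum>j\<in>{m<..n}. c j h * b j m h))"
        using elim(3) unfolding split
        by (subst (asm) sum.union_disjoint, simp, simp, force, subst (asm) sum.union_disjoint, auto)
      also have "(\<Sum>j\<in>{..<m}. c j h * b j m h) = 0" using elim(2) by simp
      finally show ?case using elim(1) by (simp add: field_simps)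
    qed
    have lim: "((\<lambda>h. (w m h - (\<Sum>j\<in>{m<..n}. c j h * b j m h)) / b m m h) \<longlongrightarrow>
        (W m - (\<Sum>j\<in>{m<..n}. Lf j * B j m)) / B m m) F"
    proof (rule tendsto_divide[OF tendsto_diff[OF wl]])
      show "((\<lambda>h. \<Sum>j\<in>{m<..n}. c j h * b j m h) \<longlongrightarrow> (\<Sum>j\<in>{m<..n}. Lf j * B j m)) F"
        by (rule tendsto_sum, rule tendsto_mult, rule Lf) (auto intro: bl)
    qed (use bl bd[OF m] in auto)
    have "(c m \<longlongrightarrow> (W m - (\<Sum>j\<in>{m<..n}. Lf j * B j m)) / B m m) F"
      by (rule Lim_transform_eventually[OF lim]) (use ev in \<open>auto elim: eventually_mono\<close>)
    then show ?thesis by blast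
  qed
  show "m \<le> n \<Longrightarrow> \<exists>L. (c m \<longlongrightarrow> L) F"
  proof -
    assume "m \<le> n"
    have "\<forall>j. m \<le> j \<and> j \<le> n \<longrightarrow> (\<exists>L. (c j \<longlongrightarrow> L) F)"
      using \<open>m \<le> n\<close>
    proof (induction m rule: inc_induct)
      case base
      have "\<exists>L. (c n \<longlongrightarrow> L) F" by (rule stp) auto
      then show ?case by (auto dest: le_antisym)
    next
      case (step k)
      have "\<exists>L. (c k \<longlongrightarrow> L) F"
        by (rule stp) (use step in auto)
      show ?case
      proof (intro allI impI)
        fix j assume j: "k \<le> j \<and> j \<le> n"
        show "\<exists>L. (c j \<longlongrightarrow> L) F"
        proof (cases "j = k")
          case True then show ?thesis using \<open>\<exists>L. (c k \<longlongrightarrow> L) F\<close> by simp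
        next
          case False then show ?thesis using step(3) j by auto
        qed
      qed
    qed
    then show ?thesis using \<open>m \<le> n\<close> by auto
  qed
qed



definition rep :: "(real \<Rightarrow> real \<Rightarrow> qseq) \<Rightarrow> nat \<Rightarrow> nat \<Rightarrow> real poly" where
  "rep P n i = (SOME p. \<forall>t\<ge>0. coeff (P 0 t n) i = poly p t)"

lemma rep:
  assumes "polynomial_process P" "harness P" "0 \<le> t"
  shows "coeff (P 0 t n) i = poly (rep P n i) t"
proof -
  have "\<forall>t\<ge>0. coeff (P 0 t n) i = poly (rep P n i) t"
    unfolding rep_def by (rule someI_ex, rule harness_poly[OF assms(1,2)])
  then show ?thesis using assms(3) by blast
qed

lemma left_deriv:
  fixes p :: "real poly"
  shows "((\<lambda>h. (poly p t - poly p (t - h)) / h) \<longlongrightarrow> poly (pderiv p) t) (at_right 0)"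
proof -
  have "((\<lambda>h. (poly p (t + h) - poly p t) / h) \<longlongrightarrow> poly (pderiv p) t) (at 0)"
    using poly_DERIV[of p t] unfolding DERIV_def .
  then have "((\<lambda>h. (poly p (t + h) - poly p t) / h) \<longlongrightarrow> poly (pderiv p) t) (at_left 0)"
    by (rule tendsto_mono[OF at_le, rotated]) simp
  then have "((\<lambda>h. (poly p (t + h) - poly p t) / h) \<longlongrightarrow> poly (pderiv p) t) (filtermap uminus (at_right 0))"
    using at_left_minus[of 0] by simp
  then have "((\<lambda>h. (poly p (t + - h) - poly p t) / - h) \<longlongrightarrow> poly (pderiv p) t) (at_right 0)"
    by (simp add: filterlim_filtermap)
  moreover have "(poly p (t + - h) - poly p t) / - h = (poly p t - poly p (t - h)) / h" for h
  proof -
    have "(poly p (t + - h) - poly p t) / - h = - ((poly p (t - h) - poly p t) / h)" by simp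
    also have "\<dots> = (poly p t - poly p (t - h)) / h" by (simp add: minus_divide_left minus_diff_eq)
    finally show ?thesis .
  qed
  ultimately show ?thesis by simp
qed

lemma ode:
  assumes pp: "polynomial_process P" and hs: "harness P" and t: "0 < t"
  shows "poly (pderiv (rep P n i)) t = (\<Sum>j\<le>n. generator P t n j * coeff (P 0 t j) i)"
proof -
  define c where "c j h = coeff (P (t - h) t n - qE n) j / h" for j h
  define b where "b j i h = poly (rep P j i) (t - h)" for j i h
  define w where "w i h = (poly (rep P n i) t - poly (rep P n i) (t - h)) / h" for i h
  have evt: "eventually (\<lambda>h. 0 < h \<and> h < t) (at_right (0::real))"
    using t unfolding eventually_at_right_field by auto
  have wid: "eventually (\<lambda>h. w i h = (\<Sum>j\<le>n. c j h * b j i h)) (at_right 0)" for i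
    using evt
  proof eventually_elim
    case (elim h)
    have h0: "0 \<le> t - h" "t - h \<le> t" using elim by auto
    have "P 0 (t - h) \<star> P (t - h) t = P 0 t" using pp_comp[OF pp, of 0 "t-h" t] h0 by simp
    then have e1: "coeff (P 0 t n) i = (\<Sum>j\<le>n. coeff (P (t - h) t n) j * coeff (P 0 (t - h) j) i)"
      using coeff_qmult_N[of "P (t - h) t" n n "P 0 (t - h)" i] pp_deg[OF pp h0, of n] by simp
    have e2: "coeff (P 0 (t - h) n) i = (\<Sum>j\<le>n. coeff (qE n) j * coeff (P 0 (t - h) j) i)"
      by (simp add: qE_def coeff_monom if_distrib[of "\<lambda>c. c * _"] cong: if_cong)
    have "coeff (P 0 t n) i - coeff (P 0 (t - h) n) i =
        (\<Sum>j\<le>n. coeff (P (t - h) t n - qE n) j * coeff (P 0 (t - h) j) i)"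
      unfolding e1 e2 by (simp add: sum_subtractf[symmetric] algebra_simps)
    then have "(coeff (P 0 t n) i - coeff (P 0 (t - h) n) i) / h =
        (\<Sum>j\<le>n. c j h * coeff (P 0 (t - h) j) i)"
      by (simp add: c_def sum_divide_distrib)
    then show ?case
      using rep[OF pp hs, of t] rep[OF pp hs h0(1)] t h0 by (simp add: w_def b_def)
  qed
  have bz: "eventually (\<lambda>h. b j i h = 0) (at_right 0)" if "j < i" for i j
    using evt
  proof eventually_elim
    case (elim h)
    have h0: "0 \<le> t - h" "t - h \<le> t" using elim by auto
    have "coeff (P 0 (t - h) j) i = 0" using pp_deg[OF pp, of 0 "t-h" j] h0 that
      by (intro coeff_eq_0) auto
    then show ?case using rep[OF pp hs h0(1)] by (simp add: b_def)
  qed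
  have bl: "(b j i \<longlongrightarrow> poly (rep P j i) t) (at_right 0)" for j i
    unfolding b_def by (intro tendsto_intros tendsto_eq_intros) auto
  have bd: "poly (rep P j j) t \<noteq> 0" for j
    using rep[OF pp hs, of t j j] pp_deg[OF pp, of 0 t j] t
    by (metis leading_coeff_0_iff less_eq_real_def order_refl)
  have wl: "(w i \<longlongrightarrow> poly (pderiv (rep P n i)) t) (at_right 0)" for i
    unfolding w_def by (rule left_deriv)
  have conv: "\<exists>L. (c j \<longlongrightarrow> L) (at_right 0)" if "j \<le> n" for j
    by (rule tri_lim[OF wid bz bl bd wl that])
  have gl: "(c j \<longlongrightarrow> generator P t n j) (at_right 0)" if jn: "j \<le> n" for j
  proof -
    obtain L where L: "(c j \<longlongrightarrow> L) (at_right 0)" using conv[OF jn] by blast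
    have "generator P t n j = L"
      unfolding generator_def using L unfolding c_def by (intro tendsto_Lim) auto
    then show ?thesis using L by simp
  qed
  have "((\<lambda>h. \<Sum>j\<le>n. c j h * b j i h) \<longlongrightarrow> (\<Sum>j\<le>n. generator P t n j * poly (rep P j i) t)) (at_right 0)"
    by (intro tendsto_sum tendsto_mult gl bl) auto
  then have "(w i \<longlongrightarrow> (\<Sum>j\<le>n. generator P t n j * poly (rep P j i) t)) (at_right 0)"
    by (rule Lim_transform_eventually) (use wid[of i] in \<open>auto elim: eventually_mono\<close>)
  then have "poly (pderiv (rep P n i)) t = (\<Sum>j\<le>n. generator P t n j * poly (rep P j i) t)"
    using wl[of i] tendsto_unique by (metis trivial_limit_at_right_real)
  then show ?thesis using rep[OF pp hs, of t] t by simp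
qed



lemma Q_eq:
  assumes pp: "polynomial_process P" and pp': "polynomial_process P'"
    and hs: "harness P" and hs': "harness P'"
    and g: "\<forall>t>0. generator P t = generator P' t"
  shows "\<forall>t\<ge>0. P 0 t n = P' 0 t n"
proof (induction n rule: less_induct)
  case (less n)
  show ?case
  proof (intro allI impI poly_eqI)
    fix T :: real and k assume T: "0 \<le> T"
    show "coeff (P 0 T n) k = coeff (P' 0 T n) k"
    proof (cases "n < k")
      case True
      then show ?thesis using pp_deg[OF pp, of 0 T n] pp_deg[OF pp', of 0 T n] T
        by (simp add: coeff_eq_0)
    next
      case False
      define D where "D = rep P n k - rep P' n k"
      define L where "L = rep P n n"
      have Dv: "poly D x = coeff (P 0 x n) k - coeff (P' 0 x n) k" if "0 \<le> x" for x
        using rep[OF pp hs that] rep[OF pp' hs' that] by (simp add: D_def)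
      have Lv: "poly L x = coeff (P 0 x n) n" if "0 \<le> x" for x
        using rep[OF pp hs that] by (simp add: L_def)
      have Lnz: "poly L x \<noteq> 0" if "0 \<le> x" for x
        using Lv[OF that] pp_deg[OF pp, of 0 x n] that by (metis leading_coeff_0_iff order.refl)
      have der: "DERIV (\<lambda>x. poly D x / poly L x) x :> 0" if x: "0 < x" for x
      proof -
        let ?a = "generator P x n n"
        have split: "\<And>f. (\<Sum>j\<le>n. f j) = (\<Sum>j<n. f j) + f n"
          by (simp add: lessThan_Suc_atMost[symmetric])
        have o1: "poly (pderiv (rep P n k)) x = (\<Sum>j\<le>n. generator P x n j * coeff (P 0 x j) k)"
          by (rule ode[OF pp hs x])
        have o2: "poly (pderiv (rep P' n k)) x = (\<Sum>j\<le>n. generator P x n j * coeff (P' 0 x j) k)"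
          using ode[OF pp' hs' x, of n k] g x by simp
        have ih: "(\<Sum>j<n. generator P x n j * coeff (P 0 x j) k) = (\<Sum>j<n. generator P x n j * coeff (P' 0 x j) k)"
          using less x by (intro sum.cong) auto
        have dD: "poly (pderiv D) x = ?a * poly D x"
        proof -
          have "poly (pderiv D) x = poly (pderiv (rep P n k)) x - poly (pderiv (rep P' n k)) x"
            by (simp add: D_def pderiv_diff)
          also have "\<dots> = ?a * (coeff (P 0 x n) k - coeff (P' 0 x n) k)"
            unfolding o1 o2 split ih by (simp add: algebra_simps)
          finally show ?thesis using Dv[of x] x by simp
        qed
        have z: "(\<Sum>j<n. generator P x n j * coeff (P 0 x j) n) = 0"
          using pp_deg[OF pp, of 0 x] x by (intro sum.neutral) (auto intro: coeff_eq_0)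
        have dL: "poly (pderiv L) x = ?a * poly L x"
          using ode[OF pp hs x, of n n] z Lv[of x] x unfolding L_def by (simp add: split)
        have "DERIV (\<lambda>x. poly D x / poly L x) x :>
            (poly (pderiv D) x * poly L x - poly D x * poly (pderiv L) x) / (poly L x * poly L x)"
          by (rule DERIV_divide) (use Lnz x in auto)
        moreover have "(poly (pderiv D) x * poly L x - poly D x * poly (pderiv L) x) / (poly L x * poly L x) = 0"
          by (simp add: dD dL)
        ultimately show ?thesis by simp
      qed
      have D0: "poly D 0 = 0" using Dv[of 0] pp_00[OF pp] pp_00[OF pp'] by simp
      have "poly D T / poly L T = poly D 0 / poly L 0"
      proof (cases "T = 0")
        case False
        then have T0: "0 < T" using T by simp
        show ?thesis
        proof (rule DERIV_isconst2[OF T0 _ der])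
          show "continuous_on {0..T} (\<lambda>x. poly D x / poly L x)"
            by (intro continuous_intros) (use Lnz in auto)
        qed (use T in auto)
      qed simp
      then have "poly D T = 0" using D0 Lnz[OF T] by simp
      then show ?thesis using Dv[OF T] by simp
    qed
  qed
qed

theorem proposition2p3:
  fixes P P' :: "real \<Rightarrow> real \<Rightarrow> nat \<Rightarrow> real poly"
  assumes "polynomial_process P" and "polynomial_process P'"
    and "harness P" and "harness P'"
    and "\<forall>t>0. generator P t = generator P' t"
  shows "\<forall>s t. 0 \<le> s \<and> s \<le> t \<longrightarrow> P s t = P' s t"
proof (intro allI impI)
  fix s t :: real assume st: "0 \<le> s \<and> s \<le> t"
  have Q: "P 0 x = P' 0 x" if "0 \<le> x" for x
    using Q_eq[OF assms] that by blast
  have "P 0 s \<star> P s t = P 0 t" using pp_comp[OF assms(1), of 0 s t] st by simp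
  also have "\<dots> = P' 0 t" using Q st by simp
  also have "\<dots> = P' 0 s \<star> P' s t" using pp_comp[OF assms(2), of 0 s t] st by simp
  also have "\<dots> = P 0 s \<star> P' s t" using Q st by simp
  finally show "P s t = P' s t"
    by (rule qcancel[rotated]) (use pp_deg[OF assms(1), of 0 s] st in auto)
qed

end
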